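(* Let $\Sigma\subset\mathbb{R}^{n+1}$ be a pure, hereditary, $(n+1)$-dimensional fan with smoothness parameters $\alpha$, let $\Sigma'\subseteq\Sigma$ be a subfan, and let $W\subseteq\mathbb{R}^{n+1}$ be a linear subspace with $W\subseteq\bigcap_{\tau\in\Sigma_n\setminus\Sigma'_n}\mathrm{aff}(\tau)$. Then for every $i$, every associated prime $P$ of the $S$-module $H_i(\mathcal{R}/\mathcal{J}[\Sigma,\Sigma'])$ satisfies $P\subseteq I(W)$.
   Context: $S=\mathbb{R}[x_0,\ldots,x_n]$; $I(W)$ is the ideal of polynomials vanishing on $W$. A cone is the positive hull of finitely many vectors, of dimension that of its linear span $\mathrm{aff}(\gamma)$; a fan is a finite set of cones closed under faces, any two meeting in a common face; $\Sigma_i$ = $i$-dim cones, facets = maximal cones; pure: all facets of dim $n+1$; hereditary: for every face $\psi$ the graph on facets containing $\psi$ with edges for pairs meeting in an $n$-face is connected; $\partial\Sigma$ = subfan of faces contained in an $n$-face lying in exactly one facet; others interior. $l_\tau$ generates the ideal of $\mathrm{aff}(\tau)$. Smoothness parameters: integers $\alpha(\tau)\ge-1$ ($\tau\in\Sigma_n$), $\ge0$ on interior $\tau$; $\Sigma^{-1}$ = subfan of $\partial\Sigma$ of cones contained in some $\tau$ with $\alpha(\tau)=-1$; $J(\tau)=\langle l_\tau^{\alpha(\tau)+1}\rangle$ for $\tau\in\Sigma_n\setminus\Sigma^{-1}_n$, $J(\gamma)=\sum_{\tau\in\Sigma_n\setminus\Sigma^{-1}_n,\gamma\subseteq\tau}J(\tau)$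 for non-facets, $J(\sigma)=0$ for facets. With $u_\rho$ unit ray generators, $P(\gamma)=\mathrm{conv}(\{0\}\cup\{u_\rho:\rho\subseteq\gamma\})$, $\mathrm{lk}(\gamma)=\mathrm{conv}\{u_\rho\}$; $\mathcal{R}[\Sigma,\Sigma']_i=\bigoplus_{\gamma\in\Sigma_i\setminus\Sigma'_i}S$ with differential the cellular boundary of the relative cellular chain complex of $(P(\Sigma),\mathrm{lk}(\Sigma)\cup P(\Sigma'))$ with $S$ coefficients; $\mathcal{R}/\mathcal{J}[\Sigma,\Sigma']_i=\bigoplus_{\gamma\in\Sigma_i\setminus\Sigma'_i}S/J(\gamma)$ is the induced quotient complex. *)

theory Defs
  imports "HOL-Analysis.Analysis" "HOL-Library.Poly_Mapping"
begin

text \<open>Coordinates of R^(n+1) are indexed by a finite type 'n (so n+1 = CARD('n)).\<close>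

type_synonym 'n mpoly = "('n \<Rightarrow>\<^sub>0 nat) \<Rightarrow>\<^sub>0 real"

definition mpvar :: "'n \<Rightarrow> 'n mpoly" where
  "mpvar i = Poly_Mapping.single (Poly_Mapping.single i 1) 1"

definition mpconst :: "real \<Rightarrow> 'n mpoly" where
  "mpconst c = Poly_Mapping.single 0 c"

definition mpeval :: "('n::finite) mpoly \<Rightarrow> real^'n \<Rightarrow> real" where
  "mpeval p x = (\<Sum>m\<in>Poly_Mapping.keys p. Poly_Mapping.lookup p m * (\<Prod>j\<in>(UNIV::'n set). (x $ j) ^ (Poly_Mapping.lookup (m::'n \<Rightarrow>\<^sub>0 nat) j)))"

definition is_ideal :: "'n mpoly set \<Rightarrow> bool" where
  "is_ideal I \<longleftrightarrow> 0 \<in> I \<and> (\<forall>f\<in>I. \<forall>g\<in>I. f + g \<in> I) \<and> (\<forall>f\<in>I. \<forall>g. g * f \<in> I)"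

definition is_prime_ideal :: "'n mpoly set \<Rightarrow> bool" where
  "is_prime_ideal P \<longleftrightarrow> is_ideal P \<and> 1 \<notin> P \<and> (\<forall>f g. f * g \<in> P \<longrightarrow> f \<in> P \<or> g \<in> P)"

definition vanishing_ideal :: "(real^'n::finite) set \<Rightarrow> 'n mpoly set" where
  "vanishing_ideal W = {f. \<forall>w\<in>W. mpeval f w = 0}"

definition gen_ideal :: "'a set \<Rightarrow> ('a \<Rightarrow> 'n mpoly) \<Rightarrow> 'n mpoly set" where
  "gen_ideal A g = {f. \<exists>c. f = (\<Sum>a\<in>A. c a * g a)}"

type_synonym 'n cone = "(real^'n) set"

definition pos_hull :: "(real^'n) set \<Rightarrow> (real^'n) set" where
  "pos_hull V = {x. \<exists>c. (\<forall>v\<in>V. c v \<ge> 0) \<and> x = (\<Sum>v\<in>V. c v *\<^sub>R v)}"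

text \<open>A cone: positive hull of finitely many vectors. Its dimension is that of its
  linear span (library dim). Cones of a fan are pointed (so that rays exist).\<close>

definition is_cone :: "(real^'n::finite) set \<Rightarrow> bool" where
  "is_cone \<gamma> \<longleftrightarrow> (\<exists>V. finite V \<and> \<gamma> = pos_hull V)"

definition is_fan :: "(real^'n::finite) set set \<Rightarrow> bool" where
  "is_fan \<Sigma> \<longleftrightarrow> finite \<Sigma>
     \<and> (\<forall>\<gamma>\<in>\<Sigma>. is_cone \<gamma> \<and> \<gamma> \<inter> uminus ` \<gamma> = {0})
     \<and> (\<forall>\<gamma>\<in>\<Sigma>. \<forall>F. F face_of \<gamma> \<and> F \<noteq> {} \<longrightarrow> F \<in> \<Sigma>)
     \<and> (\<forall>\<gamma>\<in>\<Sigma>. \<forall>\<delta>\<in>\<Sigma>. (\<gamma> \<inter> \<delta>) face_of \<gamma> \<and> (\<gamma> \<inter> \<delta>) face_of \<delta>)"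

definition cones_of_dim :: "(real^'n::finite) set set \<Rightarrow> nat \<Rightarrow> (real^'n) set set" where
  "cones_of_dim \<Sigma> i = {\<gamma>\<in>\<Sigma>. dim \<gamma> = i}"

definition fan_facets :: "(real^'n::finite) set set \<Rightarrow> (real^'n) set set" where
  "fan_facets \<Sigma> = {\<sigma>\<in>\<Sigma>. \<not> (\<exists>\<delta>\<in>\<Sigma>. \<sigma> \<subset> \<delta>)}"

definition is_pure :: "(real^'n::finite) set set \<Rightarrow> bool" where
  "is_pure \<Sigma> \<longleftrightarrow> (\<forall>\<sigma>\<in>fan_facets \<Sigma>. dim \<sigma> = CARD('n))"

definition is_hereditary :: "(real^'n::finite) set set \<Rightarrow> bool" where
  "is_hereditary \<Sigma> \<longleftrightarrow> (\<forall>\<psi>\<in>\<Sigma>.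
     (\<forall>\<sigma>\<in>fan_facets \<Sigma>. \<forall>\<sigma>'\<in>fan_facets \<Sigma>. \<psi> \<subseteq> \<sigma> \<and> \<psi> \<subseteq> \<sigma>' \<longrightarrow>
        (\<lambda>a b. a \<in> fan_facets \<Sigma> \<and> b \<in> fan_facets \<Sigma> \<and> \<psi> \<subseteq> a \<and> \<psi> \<subseteq> b
               \<and> (a \<inter> b) \<in> cones_of_dim \<Sigma> (CARD('n) - 1))\<^sup>*\<^sup>* \<sigma> \<sigma>'))"

definition boundary_fan :: "(real^'n::finite) set set \<Rightarrow> (real^'n) set set" where
  "boundary_fan \<Sigma> = {\<gamma>\<in>\<Sigma>. \<exists>\<tau>\<in>cones_of_dim \<Sigma> (CARD('n) - 1). \<gamma> \<subseteq> \<tau>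
        \<and> card {\<sigma>\<in>fan_facets \<Sigma>. \<tau> \<subseteq> \<sigma>} = 1}"

definition is_interior :: "(real^'n::finite) set set \<Rightarrow> (real^'n) set \<Rightarrow> bool" where
  "is_interior \<Sigma> \<gamma> \<longleftrightarrow> \<gamma> \<in> \<Sigma> \<and> \<gamma> \<notin> boundary_fan \<Sigma>"

definition smoothness_params :: "(real^'n::finite) set set \<Rightarrow> ((real^'n) set \<Rightarrow> int) \<Rightarrow> bool" where
  "smoothness_params \<Sigma> \<alpha> \<longleftrightarrow> (\<forall>\<tau>\<in>cones_of_dim \<Sigma> (CARD('n) - 1).
       \<alpha> \<tau> \<ge> -1 \<and> (is_interior \<Sigma> \<tau> \<longrightarrow> \<alpha> \<tau> \<ge> 0))"

definition minus_one_fan :: "(real^'n::finite) set set \<Rightarrow> ((real^'n) set \<Rightarrow> int) \<Rightarrow> (real^'n) set set" where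
  "minus_one_fan \<Sigma> \<alpha> = {\<gamma>\<in>boundary_fan \<Sigma>.
       \<exists>\<tau>\<in>cones_of_dim \<Sigma> (CARD('n) - 1). \<alpha> \<tau> = -1 \<and> \<gamma> \<subseteq> \<tau>}"

text \<open>l_tau: a linear form generating the ideal of aff(tau) (a hyperplane through 0).\<close>

definition normal_vec :: "(real^'n::finite) set \<Rightarrow> real^'n" where
  "normal_vec \<tau> = (SOME a. a \<noteq> 0 \<and> (\<forall>x\<in>\<tau>. a \<bullet> x = 0))"

definition lform :: "(real^'n::finite) set \<Rightarrow> 'n mpoly" where
  "lform \<tau> = (\<Sum>i\<in>UNIV. mpconst (normal_vec \<tau> $ i) * mpvar i)"

definition J_ideal :: "(real^'n::finite) set set \<Rightarrow> ((real^'n) set \<Rightarrow> int) \<Rightarrow> (real^'n) set \<Rightarrow> 'n mpoly set" where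
  "J_ideal \<Sigma> \<alpha> \<gamma> =
     (if \<gamma> \<in> fan_facets \<Sigma> then {0}
      else gen_ideal {\<tau>\<in>cones_of_dim \<Sigma> (CARD('n) - 1) - minus_one_fan \<Sigma> \<alpha>. \<gamma> \<subseteq> \<tau>}
                     (\<lambda>\<tau>. lform \<tau> ^ nat (\<alpha> \<tau> + 1)))"

definition detk :: "nat \<Rightarrow> (nat \<Rightarrow> nat \<Rightarrow> real) \<Rightarrow> real" where
  "detk k M = (\<Sum>p | p permutes {..<k}. of_int (sign p) * (\<Prod>i<k. M i (p i)))"

definition is_orientation :: "(real^'n::finite) set set \<Rightarrow> ((real^'n) set \<Rightarrow> (real^'n) list) \<Rightarrow> bool" where
  "is_orientation \<Sigma> ori \<longleftrightarrow> (\<forall>\<gamma>\<in>\<Sigma>. length (ori \<gamma>) = dim \<gamma> \<and> span (set (ori \<gamma>)) = span \<gamma>)"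

text \<open>Sign comparing two ordered bases a, b of the same k-dimensional subspace:
  sign of det of the transition matrix = sign of det (a_i . b_j).\<close>

definition orient_sign :: "(real^'n::finite) list \<Rightarrow> (real^'n) list \<Rightarrow> real" where
  "orient_sign a b = sgn (detk (length b) (\<lambda>i j. (a ! i) \<bullet> (b ! j)))"

text \<open>Incidence number [P(gamma) : P(tau)] for a facet tau of gamma: compare the
  orientation of gamma with (inward vector, orientation of tau).\<close>

definition incidence :: "((real^'n::finite) set \<Rightarrow> (real^'n) list) \<Rightarrow> (real^'n) set \<Rightarrow> (real^'n) set \<Rightarrow> real" where
  "incidence ori \<gamma> \<tau> = orient_sign ((SOME w. w \<in> \<gamma> \<and> w \<notin> span \<tau>) # ori \<tau>) (ori \<gamma>)"

definition cells :: "(real^'n::finite) set set \<Rightarrow> (real^'n) set set \<Rightarrow> nat \<Rightarrow> (real^'n) set set" where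
  "cells \<Sigma> \<Sigma>' i = cones_of_dim \<Sigma> i - cones_of_dim \<Sigma>' i"

text \<open>Chains: functions from cones to S, only the values on cells i matter.
  Cellular boundary d_i : R_i \<rightarrow> R_(i-1).\<close>

definition bdry :: "(real^'n::finite) set set \<Rightarrow> (real^'n) set set \<Rightarrow> ((real^'n) set \<Rightarrow> (real^'n) list)
     \<Rightarrow> nat \<Rightarrow> ((real^'n) set \<Rightarrow> 'n mpoly) \<Rightarrow> ((real^'n) set \<Rightarrow> 'n mpoly)" where
  "bdry \<Sigma> \<Sigma>' ori i c = (\<lambda>\<tau>. \<Sum>\<gamma>\<in>{\<gamma>\<in>cells \<Sigma> \<Sigma>' i. \<tau> \<subseteq> \<gamma>}. mpconst (incidence ori \<gamma> \<tau>) * c \<gamma>)"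

text \<open>Cycles and boundaries of the quotient complex R/J[Sigma,Sigma'] (chains in degree i
  with entries taken modulo J(gamma)).\<close>

definition qcycle :: "(real^'n::finite) set set \<Rightarrow> (real^'n) set set \<Rightarrow> ((real^'n) set \<Rightarrow> int)
     \<Rightarrow> ((real^'n) set \<Rightarrow> (real^'n) list) \<Rightarrow> nat \<Rightarrow> ((real^'n) set \<Rightarrow> 'n mpoly) \<Rightarrow> bool" where
  "qcycle \<Sigma> \<Sigma>' \<alpha> ori i z \<longleftrightarrow>
     (\<forall>\<tau>\<in>cells \<Sigma> \<Sigma>' (i - 1). i \<ge> 1 \<longrightarrow> bdry \<Sigma> \<Sigma>' ori i z \<tau> \<in> J_ideal \<Sigma> \<alpha> \<tau>)"

definition qboundary :: "(real^'n::finite) set set \<Rightarrow> (real^'n) set set \<Rightarrow> ((real^'n) set \<Rightarrow> int)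
     \<Rightarrow> ((real^'n) set \<Rightarrow> (real^'n) list) \<Rightarrow> nat \<Rightarrow> ((real^'n) set \<Rightarrow> 'n mpoly) \<Rightarrow> bool" where
  "qboundary \<Sigma> \<Sigma>' \<alpha> ori i z \<longleftrightarrow>
     (\<exists>b. \<forall>\<gamma>\<in>cells \<Sigma> \<Sigma>' i. z \<gamma> - bdry \<Sigma> \<Sigma>' ori (i + 1) b \<gamma> \<in> J_ideal \<Sigma> \<alpha> \<gamma>)"

definition assoc_prime_homology :: "(real^'n::finite) set set \<Rightarrow> (real^'n) set set \<Rightarrow> ((real^'n) set \<Rightarrow> int)
     \<Rightarrow> ((real^'n) set \<Rightarrow> (real^'n) list) \<Rightarrow> nat \<Rightarrow> 'n mpoly set \<Rightarrow> bool" where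
  "assoc_prime_homology \<Sigma> \<Sigma>' \<alpha> ori i P \<longleftrightarrow> is_prime_ideal P \<and>
     (\<exists>z. qcycle \<Sigma> \<Sigma>' \<alpha> ori i z \<and> P = {f. qboundary \<Sigma> \<Sigma>' \<alpha> ori i (\<lambda>\<gamma>. f * z \<gamma>)})"

end

theory Submission imports Defs begin

definition lext :: "('k \<Rightarrow> 'v::zero \<Rightarrow> 'b::comm_monoid_add) \<Rightarrow> ('k \<Rightarrow>\<^sub>0 'v) \<Rightarrow> 'b" where
  "lext F p = (\<Sum>k\<in>Poly_Mapping.keys p. F k (Poly_Mapping.lookup p k))"

lemma lext_superset:
  assumes "finite A" "Poly_Mapping.keys p \<subseteq> A" "\<And>k. F k 0 = 0"
  shows "lext F p = (\<Sum>k\<in>A. F k (Poly_Mapping.lookup p k))"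
  unfolding lext_def
  by (rule sum.mono_neutral_left) (use assms in \<open>auto simp: in_keys_iff\<close>)

lemma lext_add:
  fixes p q :: "'k \<Rightarrow>\<^sub>0 'v::comm_monoid_add"
  assumes "\<And>k. F k 0 = 0" "\<And>k a b. F k (a+b) = F k a + F k b"
  shows "lext F (p+q) = lext F p + lext F q"
proof -
  let ?A = "Poly_Mapping.keys p \<union> Poly_Mapping.keys q \<union> Poly_Mapping.keys (p+q)"
  have f: "finite ?A" by simp
  have "lext F (p+q) = (\<Sum>k\<in>?A. F k (Poly_Mapping.lookup (p+q) k))"
    by (rule lext_superset[OF f]) (use assms in auto)
  also have "\<dots> = (\<Sum>k\<in>?A. F k (Poly_Mapping.lookup p k)) + (\<Sum>k\<in>?A. F k (Poly_Mapping.lookup q k))"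
    by (simp add: lookup_add assms sum.distrib)
  also have "\<dots> = lext F p + lext F q"
    by (subst (1 2) lext_superset[OF f]) (use assms in auto)
  finally show ?thesis .
qed

lemma lext_zero[simp]: "lext F 0 = 0"
  by (simp add: lext_def)

lemma lext_single:
  assumes "\<And>k. F k 0 = 0"
  shows "lext F (Poly_Mapping.single k v) = F k v"
proof -
  have "lext F (Poly_Mapping.single k v) = (\<Sum>k'\<in>{k}. F k' (Poly_Mapping.lookup (Poly_Mapping.single k v) k'))"
    by (rule lext_superset) (use assms in auto)
  then show ?thesis by simp
qed

lemma lext_sum:
  fixes g :: "'a \<Rightarrow> 'k \<Rightarrow>\<^sub>0 'v::comm_monoid_add"
  assumes "\<And>k. F k 0 = 0" "\<And>k a b. F k (a+b) = F k a + F k b"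
  shows "lext F (sum g A) = (\<Sum>a\<in>A. lext F (g a))"
  by (induction A rule: infinite_finite_induct) (simp_all add: lext_add[OF assms])

lemma pm_repr:
  fixes p :: "'k \<Rightarrow>\<^sub>0 'v::comm_monoid_add"
  shows "p = (\<Sum>k\<in>Poly_Mapping.keys p. Poly_Mapping.single k (Poly_Mapping.lookup p k))"
proof (rule poly_mapping_eqI)
  fix x
  show "Poly_Mapping.lookup p x = Poly_Mapping.lookup (\<Sum>k\<in>Poly_Mapping.keys p. Poly_Mapping.single k (Poly_Mapping.lookup p k)) x"
    unfolding lookup_sum lookup_single
    by (cases "x \<in> Poly_Mapping.keys p") (auto simp: when_def in_keys_iff)
qed

lemma lext_single_repr: "lext Poly_Mapping.single p = (p :: 'k \<Rightarrow>\<^sub>0 'v::comm_monoid_add)"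
  by (metis lext_def pm_repr)


definition rhom :: "('a::comm_ring_1 \<Rightarrow> 'b::comm_ring_1) \<Rightarrow> bool" where
  "rhom h \<longleftrightarrow> (\<forall>x y. h (x+y) = h x + h y) \<and> (\<forall>x y. h (x*y) = h x * h y) \<and> h 1 = 1"

lemma rhom_add: "rhom h \<Longrightarrow> h (x+y) = h x + h y" by (simp add: rhom_def)
lemma rhom_mult: "rhom h \<Longrightarrow> h (x*y) = h x * h y" by (simp add: rhom_def)
lemma rhom_one: "rhom h \<Longrightarrow> h 1 = 1" by (simp add: rhom_def)
lemma rhom_zero: "rhom h \<Longrightarrow> h 0 = 0"
  using rhom_add[of h 0 0] by simp
lemma rhom_diff: "rhom h \<Longrightarrow> h (x-y) = h x - h y"
  using rhom_add[of h "x-y" y] by (simp add: algebra_simps)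
lemma rhom_sum: "rhom h \<Longrightarrow> h (sum f A) = (\<Sum>a\<in>A. h (f a))"
  by (induction A rule: infinite_finite_induct) (simp_all add: rhom_zero rhom_add)
lemma rhom_prod: "rhom h \<Longrightarrow> h (prod f A) = (\<Prod>a\<in>A. h (f a))"
  by (induction A rule: infinite_finite_induct) (simp_all add: rhom_one rhom_mult)
lemma rhom_power: "rhom h \<Longrightarrow> h (x^k) = (h x)^k"
  by (induction k) (simp_all add: rhom_one rhom_mult)

definition mon :: "('n::finite \<Rightarrow> 'b::comm_ring_1) \<Rightarrow> ('n \<Rightarrow>\<^sub>0 nat) \<Rightarrow> 'b" where
  "mon v m = (\<Prod>j\<in>UNIV. v j ^ Poly_Mapping.lookup m j)"

lemma mon_add: "mon v (m+m') = mon v m * mon v m'"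
  by (simp add: mon_def lookup_add power_add prod.distrib)

lemma mon_zero[simp]: "mon v 0 = 1"
  by (simp add: mon_def)

lemma mon_single1: "mon v (Poly_Mapping.single j 1) = v j"
proof -
  have "mon v (Poly_Mapping.single j 1) = (\<Prod>i\<in>UNIV. if i = j then v i else 1)"
    unfolding mon_def by (rule prod.cong) (auto simp: lookup_single when_def)
  then show ?thesis by simp
qed

definition gev :: "(real \<Rightarrow> 'b::comm_ring_1) \<Rightarrow> ('n::finite \<Rightarrow> 'b) \<Rightarrow> 'n mpoly \<Rightarrow> 'b" where
  "gev c v p = lext (\<lambda>m a. c a * mon v m) p"

lemma gev_add: "rhom c \<Longrightarrow> gev c v (p+q) = gev c v p + gev c v q"
  unfolding gev_def by (rule lext_add) (simp_all add: rhom_zero rhom_add distrib_right)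

lemma gev_single: "rhom c \<Longrightarrow> gev c v (Poly_Mapping.single m a) = c a * mon v m"
  unfolding gev_def by (rule lext_single) (simp add: rhom_zero)

lemma gev_zero[simp]: "gev c v 0 = 0"
  by (simp add: gev_def)

lemma gev_sum: "rhom c \<Longrightarrow> gev c v (sum g A) = (\<Sum>a\<in>A. gev c v (g a))"
  unfolding gev_def by (rule lext_sum) (simp_all add: rhom_zero rhom_add distrib_right)

lemma gev_mult:
  assumes c: "rhom c"
  shows "gev c v (p*q) = gev c v p * gev c v q"
proof -
  let ?K = "Poly_Mapping.keys p" and ?L = "Poly_Mapping.keys q"
  let ?p = "Poly_Mapping.lookup p" and ?q = "Poly_Mapping.lookup q"
  have "p * q = (\<Sum>k\<in>?K. Poly_Mapping.single k (?p k)) * (\<Sum>l\<in>?L. Poly_Mapping.single l (?q l))"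
    using pm_repr[of p] pm_repr[of q] by simp
  also have "\<dots> = (\<Sum>k\<in>?K. \<Sum>l\<in>?L. Poly_Mapping.single (k+l) (?p k * ?q l))"
    by (simp add: sum_product mult_single)
  finally have pq: "p * q = \<dots>" .
  have "gev c v (p*q) = (\<Sum>k\<in>?K. \<Sum>l\<in>?L. c (?p k) * mon v k * (c (?q l) * mon v l))"
    unfolding pq by (simp add: gev_sum[OF c] gev_single[OF c] rhom_mult[OF c] mon_add mult_ac)
  also have "\<dots> = (\<Sum>k\<in>?K. c (?p k) * mon v k) * (\<Sum>l\<in>?L. c (?q l) * mon v l)"
    by (simp add: sum_product)
  also have "\<dots> = gev c v p * gev c v q"
    by (simp add: gev_def lext_def)
  finally show ?thesis .
qed

lemma gev_one: "rhom c \<Longrightarrow> gev c v 1 = 1"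
  using gev_single[of c v 0 1] by (simp add: rhom_one)

lemma gev_rhom: "rhom c \<Longrightarrow> rhom (gev c v)"
  by (simp add: rhom_def gev_add gev_mult gev_one)

lemma gev_mpconst: "rhom c \<Longrightarrow> gev c v (mpconst a) = c a"
  unfolding mpconst_def by (simp add: gev_single)

lemma gev_mpvar: "rhom c \<Longrightarrow> gev c v (mpvar j) = v j"
  unfolding mpvar_def using gev_single[of c v "Poly_Mapping.single j 1" 1] mon_single1[of v j]
  by (simp add: rhom_one)

lemma gev_comp:
  assumes c: "rhom c" and h: "rhom h"
  shows "h (gev c v p) = gev (h \<circ> c) (h \<circ> v) p"
  unfolding gev_def lext_def mon_def
  by (simp add: rhom_sum[OF h] rhom_mult[OF h] rhom_prod[OF h] rhom_power[OF h])

lemma mpconst_rhom: "rhom mpconst"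
  unfolding rhom_def mpconst_def by (simp add: single_add mult_single)

lemma id_rhom: "rhom (id::real\<Rightarrow>real)"
  by (simp add: rhom_def)

lemma mpeval_gev: "mpeval p x = gev id (\<lambda>j. x $ j) p"
  by (simp add: mpeval_def gev_def lext_def mon_def)

lemma single_pow: "Poly_Mapping.single (Poly_Mapping.single j (1::nat)) (1::real) ^ e
   = Poly_Mapping.single (Poly_Mapping.single j e) 1"
  by (induction e) (simp_all add: mult_single single_add[symmetric] mult.commute)

lemma prod_single: "(\<Prod>j\<in>A. Poly_Mapping.single (a j) (1::real)) = Poly_Mapping.single (\<Sum>j\<in>A. a j) 1"
  by (induction A rule: infinite_finite_induct) (simp_all add: mult_single)

lemma mon_mpvar: "mon (mpvar::'n::finite \<Rightarrow> 'n mpoly) m = Poly_Mapping.single m 1"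
proof -
  have "mon mpvar m = (\<Prod>j\<in>UNIV. Poly_Mapping.single (Poly_Mapping.single j (Poly_Mapping.lookup m j)) (1::real))"
    unfolding mon_def mpvar_def by (intro prod.cong refl single_pow)
  also have "\<dots> = Poly_Mapping.single (\<Sum>j\<in>UNIV. Poly_Mapping.single j (Poly_Mapping.lookup m j)) 1"
    by (rule prod_single)
  also have "(\<Sum>j\<in>UNIV. Poly_Mapping.single j (Poly_Mapping.lookup m j)) = m"
  proof (rule poly_mapping_eqI)
    fix x show "Poly_Mapping.lookup (\<Sum>j\<in>UNIV. Poly_Mapping.single j (Poly_Mapping.lookup m j)) x = Poly_Mapping.lookup m x"
      by (simp add: lookup_sum lookup_single when_def)
  qed
  finally show ?thesis .
qed

lemma gev_id: "gev mpconst mpvar p = p"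
proof -
  have "gev mpconst mpvar p = lext Poly_Mapping.single p"
    unfolding gev_def lext_def mon_mpvar mpconst_def
    by (rule sum.cong) (simp_all add: mult_single)
  then show ?thesis by (simp add: lext_single_repr)
qed


definition Tr :: "real^'n \<Rightarrow> ('n::finite) mpoly \<Rightarrow> 'n mpoly" where
  "Tr w p = gev mpconst (\<lambda>j. mpvar j + mpconst (w $ j)) p"

lemma Tr_rhom: "rhom (Tr w)"
  unfolding Tr_def by (rule gev_rhom[OF mpconst_rhom])

lemma Tr_mpconst: "Tr w (mpconst a) = mpconst a"
  unfolding Tr_def by (rule gev_mpconst[OF mpconst_rhom])

lemma Tr_mpvar: "Tr w (mpvar j) = mpvar j + mpconst (w $ j)"
  unfolding Tr_def by (rule gev_mpvar[OF mpconst_rhom])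

lemma mpconst_add: "mpconst (a+b) = mpconst a + mpconst b"
  by (rule rhom_add[OF mpconst_rhom])
lemma mpconst_zero[simp]: "mpconst 0 = 0"
  by (rule rhom_zero[OF mpconst_rhom])

lemma Tr_inv: "Tr w (Tr (-w) p) = p"
proof -
  have "Tr w (Tr (-w) p) = gev (Tr w \<circ> mpconst) (Tr w \<circ> (\<lambda>j. mpvar j + mpconst ((-w) $ j))) p"
    unfolding Tr_def[of "-w"] by (rule gev_comp[OF mpconst_rhom Tr_rhom])
  also have "Tr w \<circ> mpconst = mpconst" by (rule ext) (simp add: Tr_mpconst)
  also have "Tr w \<circ> (\<lambda>j. mpvar j + mpconst ((-w) $ j)) = mpvar"
    by (rule ext) (simp add: rhom_add[OF Tr_rhom] Tr_mpconst Tr_mpvar add.assoc mpconst_add[symmetric])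
  finally show ?thesis by (simp add: gev_id)
qed

lemma mpeval_Tr: "mpeval (Tr w p) 0 = mpeval p w"
proof -
  have e: "(\<lambda>j. (0::real^'a) $ j) = (\<lambda>j. 0)" by simp
  have h: "rhom (gev id (\<lambda>j::'a. 0::real))" by (rule gev_rhom[OF id_rhom])
  have "mpeval (Tr w p) 0 = gev (gev id (\<lambda>j::'a. 0::real) \<circ> mpconst)
     (gev id (\<lambda>j::'a. 0::real) \<circ> (\<lambda>j. mpvar j + mpconst (w $ j))) p"
    unfolding mpeval_gev Tr_def e by (rule gev_comp[OF mpconst_rhom h])
  also have "gev id (\<lambda>j::'a. 0::real) \<circ> mpconst = id"
    by (rule ext) (simp add: gev_mpconst[OF id_rhom])
  also have "gev id (\<lambda>j::'a. 0::real) \<circ> (\<lambda>j. mpvar j + mpconst (w $ j)) = (\<lambda>j. w $ j)"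
    by (rule ext) (simp add: rhom_add[OF h] gev_mpconst[OF id_rhom] gev_mpvar[OF id_rhom])
  finally show ?thesis unfolding mpeval_gev[of p w] .
qed

lemma mpeval_zero_lookup: "mpeval p 0 = Poly_Mapping.lookup p 0"
proof -
  have "mpeval p 0 = (\<Sum>m\<in>Poly_Mapping.keys p. if m = 0 then Poly_Mapping.lookup p m else 0)"
    unfolding mpeval_def
  proof (rule sum.cong[OF refl])
    fix m :: "'a \<Rightarrow>\<^sub>0 nat"
    show "Poly_Mapping.lookup p m * (\<Prod>j\<in>UNIV. (0 $ j) ^ Poly_Mapping.lookup m j) = (if m = 0 then Poly_Mapping.lookup p m else 0)"
    proof (cases "m = 0")
      case False
      then obtain j where "Poly_Mapping.lookup m j \<noteq> 0"
        by (metis poly_mapping_eqI lookup_zero)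
      then have "(\<Prod>j\<in>UNIV. ((0::real^'a) $ j) ^ Poly_Mapping.lookup m j) = 0"
        by (intro prod_zero) auto
      then show ?thesis using False by simp
    qed simp
  qed
  also have "\<dots> = Poly_Mapping.lookup p 0"
    by (simp add: in_keys_iff)
  finally show ?thesis .
qed

lemma mpeval_rhom: "rhom (\<lambda>p. mpeval p x)"
  unfolding mpeval_gev by (rule gev_rhom[OF id_rhom])

subsection \<open>Degrees and homogeneous components\<close>

definition deg :: "('n::finite \<Rightarrow>\<^sub>0 nat) \<Rightarrow> nat" where
  "deg m = (\<Sum>j\<in>UNIV. Poly_Mapping.lookup m j)"

lemma deg_add: "deg (m+m') = deg m + deg m'"
  by (simp add: deg_def lookup_add sum.distrib)

lemma deg_zero[simp]: "deg 0 = 0" by (simp add: deg_def)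

lemma deg_eq0: "deg m = 0 \<Longrightarrow> m = 0"
  by (rule poly_mapping_eqI) (simp add: deg_def)

lemma deg_single1: "deg (Poly_Mapping.single j 1) = 1"
proof -
  have "deg (Poly_Mapping.single j 1) = (\<Sum>i\<in>UNIV. if j = i then 1 else 0)"
    unfolding deg_def lookup_single when_def by (rule refl)
  also have "\<dots> = 1" by (simp add: sum.delta)
  finally show ?thesis .
qed

definition hcomp :: "nat \<Rightarrow> ('n::finite) mpoly \<Rightarrow> 'n mpoly" where
  "hcomp d p = lext (\<lambda>m a. if deg m = d then Poly_Mapping.single m a else 0) p"

lemma hcomp_add: "hcomp d (p+q) = hcomp d p + hcomp d q"
  unfolding hcomp_def by (rule lext_add) (simp_all add: single_add)

lemma hcomp_zero[simp]: "hcomp d 0 = 0" by (simp add: hcomp_def)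

lemma hcomp_single: "hcomp d (Poly_Mapping.single m a) = (if deg m = d then Poly_Mapping.single m a else 0)"
  unfolding hcomp_def by (rule lext_single) simp

lemma hcomp_sum: "hcomp d (sum g A) = (\<Sum>a\<in>A. hcomp d (g a))"
  unfolding hcomp_def by (rule lext_sum) (simp_all add: single_add)

lemma hcomp_diff: "hcomp d (p-q) = hcomp d p - hcomp d q"
  using hcomp_add[of d "p-q" q] by (simp add: algebra_simps)

definition homog :: "nat \<Rightarrow> ('n::finite) mpoly \<Rightarrow> bool" where
  "homog k p \<longleftrightarrow> (\<forall>m\<in>Poly_Mapping.keys p. deg m = k)"

definition lowdeg :: "nat \<Rightarrow> ('n::finite) mpoly \<Rightarrow> bool" where
  "lowdeg k p \<longleftrightarrow> (\<forall>m\<in>Poly_Mapping.keys p. k \<le> deg m)"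

lemma homog_mult: "homog a p \<Longrightarrow> homog b q \<Longrightarrow> homog (a+b) (p*q)"
  unfolding homog_def using keys_mult[of p q] by (force simp: deg_add)

lemma lowdeg_mult: "lowdeg a p \<Longrightarrow> lowdeg b q \<Longrightarrow> lowdeg (a+b) (p*q)"
  unfolding lowdeg_def using keys_mult[of p q] by (force simp: deg_add)

lemma homog_add: "homog a p \<Longrightarrow> homog a q \<Longrightarrow> homog a (p+q)"
  unfolding homog_def using keys_add[of p q] by blast

lemma homog_zero: "homog a 0" by (simp add: homog_def)

lemma homog_sum: "(\<And>x. x \<in> A \<Longrightarrow> homog a (g x)) \<Longrightarrow> homog a (sum g A)"
  by (induction A rule: infinite_finite_induct) (simp_all add: homog_zero homog_add)

lemma homog_mpconst: "homog 0 (mpconst c)"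
  by (simp add: homog_def mpconst_def)

lemma homog_one: "homog 0 (1::'n::finite mpoly)"
  using homog_mpconst[of 1] by (simp add: mpconst_def)

lemma homog_mpvar: "homog 1 (mpvar j)"
  unfolding homog_def mpvar_def using deg_single1[of j] by simp

lemma homog_power: "homog a p \<Longrightarrow> homog (a*k) (p^k)"
  by (induction k) (simp_all add: homog_one homog_mult)

lemma lowdeg_0: "lowdeg 0 p" by (simp add: lowdeg_def)

lemma lowdeg_power: "lowdeg 1 p \<Longrightarrow> lowdeg k (p^k)"
proof (induction k)
  case 0 show ?case by (simp add: lowdeg_def)
next
  case (Suc k) then show ?case using lowdeg_mult[of 1 p k "p^k"] by simp
qed

lemma lowdeg_1: "Poly_Mapping.lookup p 0 = 0 \<Longrightarrow> lowdeg 1 p"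
  unfolding lowdeg_def using deg_eq0 by (metis in_keys_iff less_one not_le)

lemma lowdeg_hcomp: "lowdeg k p \<Longrightarrow> d < k \<Longrightarrow> hcomp d p = 0"
  unfolding lowdeg_def hcomp_def lext_def by (intro sum.neutral) auto

lemma hcomp_mult_homog:
  assumes g: "homog k g"
  shows "hcomp d (q*g) = (if k \<le> d then hcomp (d-k) q * g else 0)"
proof -
  let ?K = "Poly_Mapping.keys q" and ?L = "Poly_Mapping.keys g"
  let ?q = "Poly_Mapping.lookup q" and ?g = "Poly_Mapping.lookup g"
  have qg: "q * g = (\<Sum>m\<in>?K. \<Sum>l\<in>?L. Poly_Mapping.single (m+l) (?q m * ?g l))"
    by (subst (1 2) pm_repr) (simp add: sum_product mult_single)
  have L: "l \<in> ?L \<Longrightarrow> deg l = k" for l using g by (simp add: homog_def)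
  have "hcomp d (q*g) = (\<Sum>m\<in>?K. \<Sum>l\<in>?L. if k \<le> d \<and> deg m = d - k then Poly_Mapping.single (m+l) (?q m * ?g l) else 0)"
    unfolding qg hcomp_sum hcomp_single
    by (intro sum.cong refl) (auto simp: deg_add L)
  also have "\<dots> = (if k \<le> d then hcomp (d-k) q * g else 0)"
  proof (cases "k \<le> d")
    case True
    have "hcomp (d-k) q * g = (\<Sum>m\<in>?K. if deg m = d - k then Poly_Mapping.single m (?q m) else 0) * (\<Sum>l\<in>?L. Poly_Mapping.single l (?g l))"
      by (subst (2) pm_repr) (simp add: hcomp_def lext_def)
    also have "\<dots> = (\<Sum>m\<in>?K. \<Sum>l\<in>?L. if deg m = d - k then Poly_Mapping.single (m+l) (?q m * ?g l) else 0)"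
      unfolding sum_product by (intro sum.cong refl) (simp add: mult_single)
    finally show ?thesis using True by simp
  qed simp
  finally show ?thesis .
qed

lemma hcomp_mpconst_mult: "hcomp d (mpconst c * p) = mpconst c * hcomp d p"
  using hcomp_mult_homog[OF homog_mpconst, of d p c] by (simp add: mult.commute)

lemma hcomp_total:
  assumes "\<forall>m\<in>Poly_Mapping.keys p. deg m < K"
  shows "(\<Sum>d<K. hcomp d p) = p"
proof -
  have "(\<Sum>d<K. hcomp d p) = (\<Sum>m\<in>Poly_Mapping.keys p. \<Sum>d<K. if deg m = d then Poly_Mapping.single m (Poly_Mapping.lookup p m) else 0)"
    unfolding hcomp_def lext_def by (rule sum.swap)
  also have "\<dots> = (\<Sum>m\<in>Poly_Mapping.keys p. Poly_Mapping.single m (Poly_Mapping.lookup p m))"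
    using assms by (intro sum.cong refl) simp
  finally show ?thesis by (metis pm_repr)
qed


subsection \<open>Ideals\<close>

lemma gen_ideal_0: "0 \<in> gen_ideal A g"
  unfolding gen_ideal_def by (rule CollectI, rule exI[of _ "\<lambda>_. 0"]) simp

lemma gen_ideal_add: "f1 \<in> gen_ideal A g \<Longrightarrow> f2 \<in> gen_ideal A g \<Longrightarrow> f1 + f2 \<in> gen_ideal A g"
  unfolding gen_ideal_def
proof safe
  fix c1 c2
  show "\<exists>c. (\<Sum>a\<in>A. c1 a * g a) + (\<Sum>a\<in>A. c2 a * g a) = (\<Sum>a\<in>A. c a * g a)"
    by (rule exI[of _ "\<lambda>a. c1 a + c2 a"]) (simp add: sum.distrib distrib_right)
qed

lemma gen_ideal_mult: "f \<in> gen_ideal A g \<Longrightarrow> q * f \<in> gen_ideal A g"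
  unfolding gen_ideal_def
proof safe
  fix c
  show "\<exists>c'. q * (\<Sum>a\<in>A. c a * g a) = (\<Sum>a\<in>A. c' a * g a)"
    by (rule exI[of _ "\<lambda>a. q * c a"]) (simp add: sum_distrib_left mult.assoc)
qed

lemma gen_ideal_hcomp:
  assumes "\<And>a. a \<in> A \<Longrightarrow> homog (k a) (g a)" "f \<in> gen_ideal A g"
  shows "hcomp d f \<in> gen_ideal A g"
proof -
  obtain c where f: "f = (\<Sum>a\<in>A. c a * g a)" using assms(2) unfolding gen_ideal_def by blast
  have "hcomp d f = (\<Sum>a\<in>A. (if k a \<le> d then hcomp (d - k a) (c a) else 0) * g a)"
    unfolding f hcomp_sum by (intro sum.cong refl) (use hcomp_mult_homog[OF assms(1)] in auto)
  then show ?thesis unfolding gen_ideal_def by (intro CollectI exI)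
qed

lemma gen_ideal_rhom:
  assumes "rhom h" "\<And>a. a \<in> A \<Longrightarrow> h (g a) = g a" "f \<in> gen_ideal A g"
  shows "h f \<in> gen_ideal A g"
proof -
  obtain c where f: "f = (\<Sum>a\<in>A. c a * g a)" using assms(3) unfolding gen_ideal_def by blast
  have "h f = (\<Sum>a\<in>A. h (c a) * g a)"
    unfolding f rhom_sum[OF assms(1)] by (intro sum.cong refl) (simp add: rhom_mult[OF assms(1)] assms(2))
  then show ?thesis unfolding gen_ideal_def by (intro CollectI exI)
qed

lemma homog_lform: "homog 1 (lform \<tau>)"
  unfolding lform_def
  by (rule homog_sum) (use homog_mult[OF homog_mpconst homog_mpvar] in simp)

lemma J_0: "0 \<in> J_ideal \<Sigma> \<alpha> \<gamma>"
  by (simp add: J_ideal_def gen_ideal_0)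

lemma J_add: "f1 \<in> J_ideal \<Sigma> \<alpha> \<gamma> \<Longrightarrow> f2 \<in> J_ideal \<Sigma> \<alpha> \<gamma> \<Longrightarrow> f1 + f2 \<in> J_ideal \<Sigma> \<alpha> \<gamma>"
  by (auto simp: J_ideal_def gen_ideal_add split: if_splits)

lemma J_mult: "f \<in> J_ideal \<Sigma> \<alpha> \<gamma> \<Longrightarrow> q * f \<in> J_ideal \<Sigma> \<alpha> \<gamma>"
  by (auto simp: J_ideal_def gen_ideal_mult split: if_splits)

lemma J_hcomp: "f \<in> J_ideal \<Sigma> \<alpha> \<gamma> \<Longrightarrow> hcomp d f \<in> J_ideal \<Sigma> \<alpha> \<gamma>"
proof (cases "\<gamma> \<in> fan_facets \<Sigma>")
  case True
  assume "f \<in> J_ideal \<Sigma> \<alpha> \<gamma>"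
  then show ?thesis using True by (simp add: J_ideal_def)
next
  case False
  assume f: "f \<in> J_ideal \<Sigma> \<alpha> \<gamma>"
  have h: "homog (1 * nat (\<alpha> \<tau> + 1)) (lform \<tau> ^ nat (\<alpha> \<tau> + 1))" for \<tau>
    by (rule homog_power[OF homog_lform])
  have f': "f \<in> gen_ideal {\<tau> \<in> cones_of_dim \<Sigma> (CARD('a) - 1) - minus_one_fan \<Sigma> \<alpha>. \<gamma> \<subseteq> \<tau>} (\<lambda>\<tau>. lform \<tau> ^ nat (\<alpha> \<tau> + 1))"
    using f False by (simp add: J_ideal_def)
  have "hcomp d f \<in> gen_ideal {\<tau> \<in> cones_of_dim \<Sigma> (CARD('a) - 1) - minus_one_fan \<Sigma> \<alpha>. \<gamma> \<subseteq> \<tau>} (\<lambda>\<tau>. lform \<tau> ^ nat (\<alpha> \<tau> + 1))"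
    by (rule gen_ideal_hcomp[OF h f'])
  then show ?thesis using False by (simp add: J_ideal_def)
qed

lemma J_rhom:
  assumes h: "rhom h" and l: "\<And>\<tau>. \<tau> \<in> cones_of_dim \<Sigma> (CARD('n) - 1) \<Longrightarrow> \<gamma> \<subseteq> \<tau> \<Longrightarrow> h (lform \<tau>) = lform \<tau>"
    and f: "f \<in> J_ideal \<Sigma> \<alpha> (\<gamma>::(real^'n::finite) set)"
  shows "h f \<in> J_ideal \<Sigma> \<alpha> \<gamma>"
proof (cases "\<gamma> \<in> fan_facets \<Sigma>")
  case True
  then show ?thesis using f by (simp add: J_ideal_def rhom_zero[OF h])
next
  case False
  have f': "f \<in> gen_ideal {\<tau> \<in> cones_of_dim \<Sigma> (CARD('n) - 1) - minus_one_fan \<Sigma> \<alpha>. \<gamma> \<subseteq> \<tau>} (\<lambda>\<tau>. lform \<tau> ^ nat (\<alpha> \<tau> + 1))"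
    using f False by (simp add: J_ideal_def)
  have "h f \<in> gen_ideal {\<tau> \<in> cones_of_dim \<Sigma> (CARD('n) - 1) - minus_one_fan \<Sigma> \<alpha>. \<gamma> \<subseteq> \<tau>} (\<lambda>\<tau>. lform \<tau> ^ nat (\<alpha> \<tau> + 1))"
    by (rule gen_ideal_rhom[OF h _ f']) (simp add: rhom_power[OF h] l)
  then show ?thesis using False by (simp add: J_ideal_def)
qed

lemma normal_vec_prop:
  fixes \<tau> :: "(real^'n::finite) set"
  assumes "dim \<tau> < CARD('n)"
  shows "normal_vec \<tau> \<noteq> 0 \<and> (\<forall>x\<in>\<tau>. normal_vec \<tau> \<bullet> x = 0)"
proof -
  have d: "dim \<tau> < DIM(real^'n)" using assms by simp
  obtain a :: "real^'n" where a: "a \<noteq> 0" "\<And>y. y \<in> span \<tau> \<Longrightarrow> orthogonal a y"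
    using orthogonal_to_subspace_exists[OF d] by blast
  have "\<forall>x\<in>\<tau>. a \<bullet> x = 0"
  proof
    fix x assume "x \<in> \<tau>"
    then have "orthogonal a x" using a(2) span_base by blast
    then show "a \<bullet> x = 0" by (simp add: orthogonal_def)
  qed
  then have "\<exists>a. a \<noteq> 0 \<and> (\<forall>x\<in>\<tau>. a \<bullet> x = 0)"
    using a(1) by blast
  then show ?thesis unfolding normal_vec_def by (rule someI_ex)
qed

lemma Tr_lform:
  fixes \<tau> :: "(real^'n::finite) set"
  assumes "dim \<tau> < CARD('n)" "w \<in> span \<tau>"
  shows "Tr w (lform \<tau>) = lform \<tau>"
proof -
  let ?a = "normal_vec \<tau>"
  have np: "\<And>y. y \<in> \<tau> \<Longrightarrow> orthogonal ?a y"
    using normal_vec_prop[OF assms(1)] by (simp add: orthogonal_def)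
  have orth: "orthogonal ?a w"
    by (rule orthogonal_to_span[OF assms(2) np])
  have "Tr w (lform \<tau>) = (\<Sum>i\<in>UNIV. mpconst (?a $ i) * (mpvar i + mpconst (w $ i)))"
    unfolding lform_def rhom_sum[OF Tr_rhom] rhom_mult[OF Tr_rhom] Tr_mpconst Tr_mpvar ..
  also have "\<dots> = lform \<tau> + (\<Sum>i\<in>UNIV. mpconst (?a $ i) * mpconst (w $ i))"
    unfolding lform_def distrib_left sum.distrib ..
  also have "(\<Sum>i\<in>UNIV. mpconst (?a $ i) * mpconst (w $ i)) = mpconst (\<Sum>i\<in>UNIV. ?a $ i * w $ i)"
    unfolding rhom_sum[OF mpconst_rhom] rhom_mult[OF mpconst_rhom] ..
  also have "(\<Sum>i\<in>UNIV. ?a $ i * w $ i) = 0"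
    using orth by (simp add: orthogonal_def inner_vec_def)
  finally show ?thesis by simp
qed

subsection \<open>Chains\<close>

lemma QB_cong:
  assumes "qboundary \<Sigma> \<Sigma>' \<alpha> ori i z" "\<And>\<gamma>. \<gamma> \<in> cells \<Sigma> \<Sigma>' i \<Longrightarrow> z \<gamma> = z' \<gamma>"
  shows "qboundary \<Sigma> \<Sigma>' \<alpha> ori i z'"
  using assms unfolding qboundary_def by auto

lemma QB_zero: "qboundary \<Sigma> \<Sigma>' \<alpha> ori i (\<lambda>\<gamma>. 0)"
  unfolding qboundary_def by (rule exI[of _ "\<lambda>_. 0"]) (simp add: bdry_def J_0)

lemma QB_add:
  assumes "qboundary \<Sigma> \<Sigma>' \<alpha> ori i z1" "qboundary \<Sigma> \<Sigma>' \<alpha> ori i z2"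
  shows "qboundary \<Sigma> \<Sigma>' \<alpha> ori i (\<lambda>\<gamma>. z1 \<gamma> + z2 \<gamma>)"
proof -
  obtain b1 where b1: "\<forall>\<gamma>\<in>cells \<Sigma> \<Sigma>' i. z1 \<gamma> - bdry \<Sigma> \<Sigma>' ori (i + 1) b1 \<gamma> \<in> J_ideal \<Sigma> \<alpha> \<gamma>"
    using assms(1) unfolding qboundary_def by blast
  obtain b2 where b2: "\<forall>\<gamma>\<in>cells \<Sigma> \<Sigma>' i. z2 \<gamma> - bdry \<Sigma> \<Sigma>' ori (i + 1) b2 \<gamma> \<in> J_ideal \<Sigma> \<alpha> \<gamma>"
    using assms(2) unfolding qboundary_def by blast
  have bd: "bdry \<Sigma> \<Sigma>' ori (i + 1) (\<lambda>\<gamma>. b1 \<gamma> + b2 \<gamma>) \<gamma> = bdry \<Sigma> \<Sigma>' ori (i + 1) b1 \<gamma> + bdry \<Sigma> \<Sigma>' ori (i + 1) b2 \<gamma>" for \<gamma>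
    unfolding bdry_def distrib_left sum.distrib by (rule refl)
  show ?thesis unfolding qboundary_def
  proof (rule exI[of _ "\<lambda>\<gamma>. b1 \<gamma> + b2 \<gamma>"], intro ballI)
    fix \<gamma> assume g: "\<gamma> \<in> cells \<Sigma> \<Sigma>' i"
    have "z1 \<gamma> + z2 \<gamma> - bdry \<Sigma> \<Sigma>' ori (i + 1) (\<lambda>\<gamma>. b1 \<gamma> + b2 \<gamma>) \<gamma>
        = (z1 \<gamma> - bdry \<Sigma> \<Sigma>' ori (i + 1) b1 \<gamma>) + (z2 \<gamma> - bdry \<Sigma> \<Sigma>' ori (i + 1) b2 \<gamma>)"
      unfolding bd by (simp add: algebra_simps)
    then show "z1 \<gamma> + z2 \<gamma> - bdry \<Sigma> \<Sigma>' ori (i + 1) (\<lambda>\<gamma>. b1 \<gamma> + b2 \<gamma>) \<gamma> \<in> J_ideal \<Sigma> \<alpha> \<gamma>"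
      using b1 b2 g J_add by metis
  qed
qed

lemma QB_sum:
  assumes "\<And>d. d \<in> D \<Longrightarrow> qboundary \<Sigma> \<Sigma>' \<alpha> ori i (f d)"
  shows "qboundary \<Sigma> \<Sigma>' \<alpha> ori i (\<lambda>\<gamma>. \<Sum>d\<in>D. f d \<gamma>)"
  using assms
proof (induction D rule: infinite_finite_induct)
  case (insert x F)
  then show ?case using QB_add[of \<Sigma> \<Sigma>' \<alpha> ori i "f x" "\<lambda>\<gamma>. \<Sum>d\<in>F. f d \<gamma>"] by simp
qed (simp_all add: QB_zero)

lemma QB_map:
  fixes \<phi> :: "('n::finite) mpoly \<Rightarrow> 'n mpoly"
  assumes add: "\<And>p q. \<phi> (p+q) = \<phi> p + \<phi> q"
    and cm: "\<And>c p. \<phi> (mpconst c * p) = mpconst c * \<phi> p"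
    and J: "\<And>\<gamma> f. \<gamma> \<in> cells \<Sigma> \<Sigma>' i \<Longrightarrow> f \<in> J_ideal \<Sigma> \<alpha> \<gamma> \<Longrightarrow> \<phi> f \<in> J_ideal \<Sigma> \<alpha> \<gamma>"
    and qb: "qboundary (\<Sigma>::(real^'n) set set) \<Sigma>' \<alpha> ori i z"
  shows "qboundary \<Sigma> \<Sigma>' \<alpha> ori i (\<lambda>\<gamma>. \<phi> (z \<gamma>))"
proof -
  have z0: "\<phi> 0 = 0" using add[of 0 0] by simp
  have df: "\<phi> (p - q) = \<phi> p - \<phi> q" for p q using add[of "p-q" q] by (simp add: algebra_simps)
  have sm: "\<phi> (sum g A) = (\<Sum>a\<in>A. \<phi> (g a))" for g :: "'a \<Rightarrow> 'n mpoly" and A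
    by (induction A rule: infinite_finite_induct) (simp_all add: z0 add)
  obtain b where b: "\<forall>\<gamma>\<in>cells \<Sigma> \<Sigma>' i. z \<gamma> - bdry \<Sigma> \<Sigma>' ori (i + 1) b \<gamma> \<in> J_ideal \<Sigma> \<alpha> \<gamma>"
    using qb unfolding qboundary_def by blast
  have bd: "bdry \<Sigma> \<Sigma>' ori (i + 1) (\<lambda>\<gamma>. \<phi> (b \<gamma>)) \<gamma> = \<phi> (bdry \<Sigma> \<Sigma>' ori (i + 1) b \<gamma>)" for \<gamma>
    unfolding bdry_def sm cm ..
  show ?thesis unfolding qboundary_def
  proof (rule exI[of _ "\<lambda>\<gamma>. \<phi> (b \<gamma>)"], intro ballI)
    fix \<gamma> assume g: "\<gamma> \<in> cells \<Sigma> \<Sigma>' i"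
    show "\<phi> (z \<gamma>) - bdry \<Sigma> \<Sigma>' ori (i + 1) (\<lambda>\<gamma>. \<phi> (b \<gamma>)) \<gamma> \<in> J_ideal \<Sigma> \<alpha> \<gamma>"
      unfolding bd df[symmetric] using J[OF g] b g by blast
  qed
qed

lemma QB_mult:
  assumes "qboundary (\<Sigma>::(real^'n::finite) set set) \<Sigma>' \<alpha> ori i z"
  shows "qboundary \<Sigma> \<Sigma>' \<alpha> ori i (\<lambda>\<gamma>. q * z \<gamma>)"
proof (rule QB_map[OF _ _ _ assms])
  show "q * (p + p') = q * p + q * p'" for p p' by (rule distrib_left)
  show "q * (mpconst c * p) = mpconst c * (q * p)" for c p by (rule mult.left_commute)
qed (rule J_mult)

lemma QB_hcomp:
  assumes "qboundary (\<Sigma>::(real^'n::finite) set set) \<Sigma>' \<alpha> ori i z"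
  shows "qboundary \<Sigma> \<Sigma>' \<alpha> ori i (\<lambda>\<gamma>. hcomp d (z \<gamma>))"
  by (rule QB_map[OF _ _ _ assms]) (rule hcomp_add, rule hcomp_mpconst_mult, erule J_hcomp)

lemma QB_unit:
  assumes qb: "qboundary (\<Sigma>::(real^'n::finite) set set) \<Sigma>' \<alpha> ori i (\<lambda>\<gamma>. f * z \<gamma>)"
    and f0: "Poly_Mapping.lookup f 0 \<noteq> 0"
    and fin: "finite (cells \<Sigma> \<Sigma>' i)"
  shows "qboundary \<Sigma> \<Sigma>' \<alpha> ori i z"
proof -
  define c where "c = Poly_Mapping.lookup f 0"
  define u where "u = mpconst (1/c) * f"
  define g where "g = 1 - u"
  have quz: "qboundary \<Sigma> \<Sigma>' \<alpha> ori i (\<lambda>\<gamma>. u * z \<gamma>)"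
    using QB_mult[OF qb, of "mpconst (1/c)"] by (simp add: u_def mult.assoc)
  have mc: "mpeval (mpconst a) x = a" for a and x :: "real^'n"
    unfolding mpeval_gev by (simp add: gev_mpconst[OF id_rhom])
  have "mpeval u 0 = mpeval (mpconst (1/c) :: 'n mpoly) 0 * mpeval f 0"
    unfolding u_def mpeval_gev by (rule gev_mult[OF id_rhom])
  also have "\<dots> = 1" unfolding mc mpeval_zero_lookup using f0 by (simp add: c_def mpconst_def)
  finally have "mpeval u 0 = 1" .
  then have "Poly_Mapping.lookup g 0 = 0"
    by (simp add: g_def lookup_minus mpeval_zero_lookup)
  then have g1: "lowdeg 1 g" by (rule lowdeg_1)
  have yk: "qboundary \<Sigma> \<Sigma>' \<alpha> ori i (\<lambda>\<gamma>. z \<gamma> - g^k * z \<gamma>)" for k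
  proof (induction k)
    case 0
    have e0: "(\<lambda>\<gamma>. z \<gamma> - g^0 * z \<gamma>) = (\<lambda>\<gamma>. 0)" by simp
    show ?case unfolding e0 by (rule QB_zero)
  next
    case (Suc k)
    have q: "qboundary \<Sigma> \<Sigma>' \<alpha> ori i (\<lambda>\<gamma>. u * z \<gamma> + g * (z \<gamma> - g^k * z \<gamma>))"
      by (rule QB_add[OF quz QB_mult[OF Suc]])
    have e: "u * z \<gamma> + g * (z \<gamma> - g^k * z \<gamma>) = z \<gamma> - g^(Suc k) * z \<gamma>" for \<gamma>
    proof -
      have ug: "u = 1 - g" by (simp add: g_def)
      show ?thesis unfolding ug by (simp add: algebra_simps)
    qed
    show ?case using q unfolding e .
  qed
  have "finite (\<Union>\<gamma>\<in>cells \<Sigma> \<Sigma>' i. deg ` Poly_Mapping.keys (z \<gamma>))"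
    using fin by simp
  then obtain K where K: "\<forall>x\<in>(\<Union>\<gamma>\<in>cells \<Sigma> \<Sigma>' i. deg ` Poly_Mapping.keys (z \<gamma>)). x < K"
    unfolding finite_nat_set_iff_bounded by blast
  have hd: "qboundary \<Sigma> \<Sigma>' \<alpha> ori i (\<lambda>\<gamma>. hcomp d (z \<gamma>))" if "d < K" for d
  proof -
    have l: "lowdeg (K + 0) (g^K * z \<gamma>)" for \<gamma>
      by (rule lowdeg_mult[OF lowdeg_power[OF g1] lowdeg_0])
    have h0: "hcomp d (g^K * z \<gamma>) = 0" for \<gamma>
      by (rule lowdeg_hcomp[OF l]) (use that in simp)
    have e: "hcomp d (z \<gamma> - g^K * z \<gamma>) = hcomp d (z \<gamma>)" for \<gamma>
      unfolding hcomp_diff h0 by simp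
    show ?thesis using QB_hcomp[OF yk[of K], of d] unfolding e .
  qed
  have "qboundary \<Sigma> \<Sigma>' \<alpha> ori i (\<lambda>\<gamma>. \<Sum>d<K. hcomp d (z \<gamma>))"
    by (rule QB_sum) (use hd in auto)
  then show ?thesis
  proof (rule QB_cong)
    fix \<gamma> assume g: "\<gamma> \<in> cells \<Sigma> \<Sigma>' i"
    show "(\<Sum>d<K. hcomp d (z \<gamma>)) = z \<gamma>"
    proof (rule hcomp_total, intro ballI)
      fix m assume "m \<in> Poly_Mapping.keys (z \<gamma>)"
      then have "deg m \<in> (\<Union>\<gamma>\<in>cells \<Sigma> \<Sigma>' i. deg ` Poly_Mapping.keys (z \<gamma>))"
        using g by blast
      then show "deg m < K" using K by blast
    qed
  qed
qed


lemma fan_finite: "is_fan \<Sigma> \<Longrightarrow> finite \<Sigma>"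
  unfolding is_fan_def by (elim conjE)
lemma fan_cone: "is_fan \<Sigma> \<Longrightarrow> \<gamma> \<in> \<Sigma> \<Longrightarrow> is_cone \<gamma>"
  unfolding is_fan_def by (elim conjE) (drule bspec, assumption, erule conjunct1)
lemma fan_face: "is_fan \<Sigma> \<Longrightarrow> \<gamma> \<in> \<Sigma> \<Longrightarrow> F face_of \<gamma> \<Longrightarrow> F \<noteq> {} \<Longrightarrow> F \<in> \<Sigma>"
  unfolding is_fan_def by (elim conjE) (drule bspec[where x=\<gamma>], assumption, blast)
lemma fan_int: "is_fan \<Sigma> \<Longrightarrow> \<gamma> \<in> \<Sigma> \<Longrightarrow> \<delta> \<in> \<Sigma> \<Longrightarrow> (\<gamma> \<inter> \<delta>) face_of \<delta>"
  unfolding is_fan_def by (elim conjE) (drule bspec[where x=\<gamma>], assumption, drule bspec[where x=\<delta>], assumption, erule conjunct2)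

lemma zero_in_fan_cone:
  assumes "is_fan \<Sigma>" "\<gamma> \<in> \<Sigma>"
  shows "(0::real^'n::finite) \<in> \<gamma>"
proof -
  obtain V where V: "finite V" "\<gamma> = pos_hull V"
    using fan_cone[OF assms] unfolding is_cone_def by blast
  have "0 \<in> pos_hull V"
    unfolding pos_hull_def by (rule CollectI, rule exI[of _ "\<lambda>_. 0"]) simp
  then show ?thesis using V by simp
qed

lemma gen_tau_cells:
  assumes F: "is_fan \<Sigma>" and F': "is_fan \<Sigma>'"
    and g: "\<gamma> \<in> cells \<Sigma> \<Sigma>' i" and t: "\<tau> \<in> cones_of_dim \<Sigma> k" and sub: "\<gamma> \<subseteq> \<tau>"
  shows "\<tau> \<in> cells (\<Sigma>::(real^'n::finite) set set) \<Sigma>' k"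
proof -
  have gS: "\<gamma> \<in> \<Sigma>" and dg: "dim \<gamma> = i" and gn: "\<gamma> \<notin> cones_of_dim \<Sigma>' i"
    using g by (auto simp: cells_def cones_of_dim_def)
  have tS: "\<tau> \<in> \<Sigma>" using t by (simp add: cones_of_dim_def)
  have "\<tau> \<notin> \<Sigma>'"
  proof
    assume tS': "\<tau> \<in> \<Sigma>'"
    have "(\<gamma> \<inter> \<tau>) face_of \<tau>" by (rule fan_int[OF F gS tS])
    then have fo: "\<gamma> face_of \<tau>" using sub by (simp add: Int_absorb2)
    have ne: "\<gamma> \<noteq> {}" using zero_in_fan_cone[OF F gS] by blast
    have "\<gamma> \<in> \<Sigma>'" by (rule fan_face[OF F' tS' fo ne])
    then show False using gn dg by (simp add: cones_of_dim_def)
  qed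
  then show ?thesis using t by (simp add: cells_def cones_of_dim_def)
qed

theorem lemma5p2:
  fixes \<Sigma> \<Sigma>' :: "(real^'n::finite) set set"
    and \<alpha> :: "(real^'n) set \<Rightarrow> int"
    and ori :: "(real^'n) set \<Rightarrow> (real^'n) list"
    and W :: "(real^'n) set"
    and i :: nat and P :: "'n mpoly set"
  assumes "is_fan \<Sigma>" and "is_pure \<Sigma>" and "is_hereditary \<Sigma>"
    and "smoothness_params \<Sigma> \<alpha>"
    and "is_fan \<Sigma>'" and "\<Sigma>' \<subseteq> \<Sigma>"
    and "subspace W"
    and "W \<subseteq> (\<Inter>\<tau>\<in>cells \<Sigma> \<Sigma>' (CARD('n) - 1). span \<tau>)"
    and "is_orientation \<Sigma> ori"
    and "assoc_prime_homology \<Sigma> \<Sigma>' \<alpha> ori i P"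
  shows "P \<subseteq> vanishing_ideal W"
proof
  fix f assume fP: "f \<in> P"
  obtain z where prime: "is_prime_ideal P"
    and Pdef: "P = {f. qboundary \<Sigma> \<Sigma>' \<alpha> ori i (\<lambda>\<gamma>. f * z \<gamma>)}"
    using assms(10) unfolding assoc_prime_homology_def by blast
  have notz: "\<not> qboundary \<Sigma> \<Sigma>' \<alpha> ori i z"
  proof
    assume "qboundary \<Sigma> \<Sigma>' \<alpha> ori i z"
    then have "1 \<in> P" unfolding Pdef by simp
    then show False using prime by (simp add: is_prime_ideal_def)
  qed
  have fin: "finite (cells \<Sigma> \<Sigma>' i)"
  proof (rule finite_subset)
    show "cells \<Sigma> \<Sigma>' i \<subseteq> \<Sigma>" by (auto simp: cells_def cones_of_dim_def)
    show "finite \<Sigma>" by (rule fan_finite[OF assms(1)])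
  qed
  have cardpos: "CARD('n) - 1 < CARD('n)" by simp
  have TrJ: "Tr w g \<in> J_ideal \<Sigma> \<alpha> \<gamma>"
    if w: "w \<in> W" and g: "\<gamma> \<in> cells \<Sigma> \<Sigma>' i" and gJ: "g \<in> J_ideal \<Sigma> \<alpha> \<gamma>" for w g \<gamma>
  proof (rule J_rhom[OF Tr_rhom _ gJ])
    fix \<tau> assume t: "\<tau> \<in> cones_of_dim \<Sigma> (CARD('n) - 1)" and sub: "\<gamma> \<subseteq> \<tau>"
    have tc: "\<tau> \<in> cells \<Sigma> \<Sigma>' (CARD('n) - 1)"
      by (rule gen_tau_cells[OF assms(1) assms(5) g t sub])
    then have "w \<in> span \<tau>" using assms(8) w by blast
    moreover have "dim \<tau> < CARD('n)" using t cardpos by (simp add: cones_of_dim_def)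
    ultimately show "Tr w (lform \<tau>) = lform \<tau>" by (intro Tr_lform)
  qed
  have QBT: "qboundary \<Sigma> \<Sigma>' \<alpha> ori i (\<lambda>\<gamma>. Tr w (y \<gamma>))"
    if w: "w \<in> W" and qy: "qboundary \<Sigma> \<Sigma>' \<alpha> ori i y" for w y
  proof (rule QB_map[OF _ _ _ qy])
    show "Tr w (p + q) = Tr w p + Tr w q" for p q by (rule rhom_add[OF Tr_rhom])
    show "Tr w (mpconst c * p) = mpconst c * Tr w p" for c p
      by (simp add: rhom_mult[OF Tr_rhom] Tr_mpconst)
    show "Tr w g \<in> J_ideal \<Sigma> \<alpha> \<gamma>" if "\<gamma> \<in> cells \<Sigma> \<Sigma>' i" "g \<in> J_ideal \<Sigma> \<alpha> \<gamma>" for \<gamma> g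
      by (rule TrJ[OF w that])
  qed
  show "f \<in> vanishing_ideal W"
    unfolding vanishing_ideal_def
  proof (rule CollectI, rule ballI, rule ccontr)
    fix w assume w: "w \<in> W" and ne: "mpeval f w \<noteq> 0"
    have qf: "qboundary \<Sigma> \<Sigma>' \<alpha> ori i (\<lambda>\<gamma>. f * z \<gamma>)" using fP Pdef by blast
    have "qboundary \<Sigma> \<Sigma>' \<alpha> ori i (\<lambda>\<gamma>. Tr w (f * z \<gamma>))" by (rule QBT[OF w qf])
    then have q1: "qboundary \<Sigma> \<Sigma>' \<alpha> ori i (\<lambda>\<gamma>. Tr w f * Tr w (z \<gamma>))"
      by (simp add: rhom_mult[OF Tr_rhom])
    have "Poly_Mapping.lookup (Tr w f) 0 \<noteq> 0"
      using ne by (simp add: mpeval_zero_lookup[symmetric] mpeval_Tr)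
    then have q2: "qboundary \<Sigma> \<Sigma>' \<alpha> ori i (\<lambda>\<gamma>. Tr w (z \<gamma>))"
      by (rule QB_unit[OF q1 _ fin])
    have mw: "-w \<in> W" using assms(7) w by (rule subspace_neg)
    have "qboundary \<Sigma> \<Sigma>' \<alpha> ori i (\<lambda>\<gamma>. Tr (-w) (Tr w (z \<gamma>)))" by (rule QBT[OF mw q2])
    moreover have "Tr (-w) (Tr w p) = p" for p using Tr_inv[of "-w" p] by simp
    ultimately have "qboundary \<Sigma> \<Sigma>' \<alpha> ori i z" by simp
    then show False using notz by blast
  qed
qed

end
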